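(* There exists $C>0$ such that the following holds. Let $d,r:\mathbb{N}\to\mathbb{N}$ be functions with $d$ nondecreasing, taking only odd values at least $5$, $d(n)\ge2r(n)+1$, and $r(n)\ge n$, $d(n)-2r(n)\ge n$ for all $n$. Let $\alpha_n=(1\;2\;\cdots\;d(n))$, $\beta_n=(1\;(1+r(n))\;(1+2r(n)))\in\mathrm{Alt}(d(n))$, $\alpha=(\alpha_n)_n,\beta=(\beta_n)_n\in\prod_n\mathrm{Alt}(d(n))$, $S=\{\alpha,\beta\}$ and $G=\langle S\rangle$. Then $\mathcal{L}_G^S(l)\le\exp(Cl^2\log l)$ for all integers $l\ge2$.
   Context: $\mathbb{N}=\{1,2,\dots\}$. $B_S(l)$ is the ball of radius $l$ about $e$ in the word metric of $S$. A local embedding of $A\subseteq G$ into a group $Q$ is an injective map $\psi:A\to Q$ with $\psi(gh)=\psi(g)\psi(h)$ whenever $g,h,gh\in A$. $\mathcal{L}_G^S(l)$ is the minimal order of a finite group admitting a local embedding of $B_S(l)$. *)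

theory Defs
  imports "HOL-Algebra.Algebra" Complex_Main
begin

text \<open>Elements of the product group prod_{n in N} Alt(d(n)) are represented as
  functions g :: nat => (nat => nat), where g n is a permutation of {1..d n}
  (identity outside), for n >= 1; the component at index 0 is the identity.\<close>

type_synonym pelem = "nat \<Rightarrow> nat \<Rightarrow> nat"

definition pmult :: "pelem \<Rightarrow> pelem \<Rightarrow> pelem" where
  "pmult g h = (\<lambda>n. g n \<circ> h n)"

definition pone :: pelem where
  "pone = (\<lambda>n. id)"

definition pinv :: "pelem \<Rightarrow> pelem" where
  "pinv g = (\<lambda>n. Hilbert_Choice.inv (g n))"

definition alpha_seq :: "(nat \<Rightarrow> nat) \<Rightarrow> pelem" where
  "alpha_seq d = (\<lambda>n i. if n = 0 then i
       else if 1 \<le> i \<and> i < d n then i + 1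
       else if i = d n then 1 else i)"

definition beta_seq :: "(nat \<Rightarrow> nat) \<Rightarrow> pelem" where
  "beta_seq r = (\<lambda>n i. if n = 0 then i
       else if i = 1 then 1 + r n
       else if i = 1 + r n then 1 + 2 * r n
       else if i = 1 + 2 * r n then 1 else i)"

definition word_ball :: "pelem set \<Rightarrow> nat \<Rightarrow> pelem set" where
  "word_ball S l = {foldr pmult w pone | w. length w \<le> l \<and> set w \<subseteq> S \<union> pinv ` S}"

definition local_embedding ::
  "('a \<Rightarrow> 'a \<Rightarrow> 'a) \<Rightarrow> 'a set \<Rightarrow> ('b, 'c) monoid_scheme \<Rightarrow> ('a \<Rightarrow> 'b) \<Rightarrow> bool" where
  "local_embedding mul A Q \<psi> \<longleftrightarrow>
     inj_on \<psi> A \<and> \<psi> ` A \<subseteq> carrier Q \<and>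
     (\<forall>g\<in>A. \<forall>h\<in>A. mul g h \<in> A \<longrightarrow> \<psi> (mul g h) = \<psi> g \<otimes>\<^bsub>Q\<^esub> \<psi> h)"

text \<open>Minimal order of a finite group admitting a local embedding of A.
  Every finite group is isomorphic to one with carrier a subset of nat, so it
  suffices to range over groups on nat.\<close>
definition min_local_order :: "('a \<Rightarrow> 'a \<Rightarrow> 'a) \<Rightarrow> 'a set \<Rightarrow> nat" where
  "min_local_order mul A = (LEAST k. \<exists>(Q :: nat monoid) \<psi>.
      group Q \<and> finite (carrier Q) \<and> order Q = k \<and> local_embedding mul A Q \<psi>)"

definition L_alt :: "(nat \<Rightarrow> nat) \<Rightarrow> (nat \<Rightarrow> nat) \<Rightarrow> nat \<Rightarrow> nat" where
  "L_alt d r l = min_local_order pmult (word_ball {alpha_seq d, beta_seq r} l)"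

end

theory Submission
  imports Defs "HOL-Combinatorics.Permutations"
begin

datatype letter = LA | LB | LAi | LBi

fun letf :: "nat \<Rightarrow> nat \<Rightarrow> letter \<Rightarrow> nat \<Rightarrow> nat" where
  "letf D r LA i = (if 1 \<le> i \<and> i < D then i + 1 else if i = D then 1 else i)"
| "letf D r LB i = (if i = 1 then 1 + r else if i = 1 + r then 1 + 2 * r
                    else if i = 1 + 2 * r then 1 else i)"
| "letf D r LAi i = (if 1 < i \<and> i \<le> D then i - 1 else if i = 1 then D else i)"
| "letf D r LBi i = (if i = 1 then 1 + 2 * r else if i = 1 + r then 1
                    else if i = 1 + 2 * r then 1 + r else i)"

fun invl :: "letter \<Rightarrow> letter" where
  "invl LA = LAi" | "invl LAi = LA" | "invl LB = LBi" | "invl LBi = LB"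

lemma invl_invl[simp]: "invl (invl c) = c"
  by (cases c) auto

lemma letf_inv: "1 \<le> r \<Longrightarrow> 2 * r + 1 \<le> D \<Longrightarrow> letf D r (invl c) (letf D r c i) = i"
  by (cases c) auto

lemma letf_inv': "1 \<le> r \<Longrightarrow> 2 * r + 1 \<le> D \<Longrightarrow> letf D r c (letf D r (invl c) i) = i"
  using letf_inv[of r D "invl c"] by simp

lemma letf_out: "2 * r + 1 \<le> D \<Longrightarrow> i = 0 \<or> D < i \<Longrightarrow> letf D r c i = i"
  by (cases c) auto

lemma letf_permutes: assumes "1 \<le> r" "2 * r + 1 \<le> D"
  shows "letf D r c permutes {1..D}"
  unfolding permutes_def
proof (intro conjI allI impI)
  fix x assume "x \<notin> {1..D}" thus "letf D r c x = x" using letf_out[OF assms(2)] by auto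
next
  fix y show "\<exists>!x. letf D r c x = y"
    using letf_inv[OF assms] letf_inv'[OF assms] by metis
qed

fun cw :: "nat \<Rightarrow> nat \<Rightarrow> letter list \<Rightarrow> nat \<Rightarrow> nat" where
  "cw D r [] = id"
| "cw D r (c # u) = letf D r c \<circ> cw D r u"

lemma cw_append: "cw D r (u @ v) = cw D r u \<circ> cw D r v"
  by (induction u) auto

definition invw :: "letter list \<Rightarrow> letter list" where
  "invw u = rev (map invl u)"

lemma invw_invw[simp]: "invw (invw u) = u"
  unfolding invw_def by (simp add: rev_map comp_def)

lemma length_invw[simp]: "length (invw u) = length u"
  unfolding invw_def by simp

lemma cw_invw: assumes "1 \<le> r" "2 * r + 1 \<le> D"
  shows "cw D r (invw u) \<circ> cw D r u = id"
proof (induction u)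
  case Nil thus ?case by (simp add: invw_def)
next
  case (Cons c u)
  have "cw D r (invw (c # u)) = cw D r (invw u) \<circ> letf D r (invl c)"
    by (simp add: invw_def cw_append)
  hence "cw D r (invw (c # u)) \<circ> cw D r (c # u) = cw D r (invw u) \<circ> (letf D r (invl c) \<circ> letf D r c) \<circ> cw D r u"
    by (simp add: comp_assoc)
  also have "letf D r (invl c) \<circ> letf D r c = id" using letf_inv[OF assms] by (auto simp: fun_eq_iff)
  finally show ?case using Cons by simp
qed

lemma cw_invw': assumes "1 \<le> r" "2 * r + 1 \<le> D"
  shows "cw D r u \<circ> cw D r (invw u) = id"
  using cw_invw[OF assms, of "invw u"] by simp

lemma cw_eq_iff: assumes "1 \<le> r" "2 * r + 1 \<le> D"
  shows "cw D r u = cw D r v \<longleftrightarrow> cw D r (invw u @ v) = id"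
proof
  assume "cw D r u = cw D r v"
  thus "cw D r (invw u @ v) = id" using cw_invw[OF assms, of u] by (simp add: cw_append)
next
  assume h: "cw D r (invw u @ v) = id"
  have "cw D r u = cw D r u \<circ> (cw D r (invw u) \<circ> cw D r v)" using h by (simp add: cw_append)
  also have "\<dots> = cw D r v" using cw_invw'[OF assms, of u] by (simp add: comp_assoc[symmetric])
  finally show "cw D r u = cw D r v" .
qed

lemma cw_permutes: assumes "1 \<le> r" "2 * r + 1 \<le> D"
  shows "cw D r u permutes {1..D}"
proof (induction u)
  case Nil show ?case using permutes_id by (simp add: id_def)
next
  case (Cons c u) show ?case
    unfolding cw.simps by (rule permutes_compose[OF Cons letf_permutes[OF assms]])
qed

lemma cw_out: "2 * r + 1 \<le> D \<Longrightarrow> i = 0 \<or> D < i \<Longrightarrow> cw D r u i = i"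
  by (induction u) (auto simp: letf_out)


definition iota :: "nat \<Rightarrow> int \<Rightarrow> nat" where
  "iota D x = nat (x mod int D) + 1"

lemma iota_eq: "0 < D \<Longrightarrow> iota D a = iota D b \<longleftrightarrow> int D dvd (a - b)"
proof -
  assume D: "0 < D"
  have "iota D a = iota D b \<longleftrightarrow> a mod int D = b mod int D"
    unfolding iota_def using D by (auto simp: nat_eq_iff)
  also have "\<dots> \<longleftrightarrow> int D dvd (a - b)" by (rule mod_eq_dvd_iff)
  finally show ?thesis .
qed

lemma iota_small: "0 \<le> x \<Longrightarrow> x < int D \<Longrightarrow> iota D x = nat x + 1"
  unfolding iota_def by simp

lemma iota_1: "0 < D \<Longrightarrow> iota D x = 1 \<longleftrightarrow> int D dvd x"
  using iota_eq[of D x 0] iota_small[of 0 D] by simp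

lemma iota_r: "r < D \<Longrightarrow> iota D x = 1 + r \<longleftrightarrow> int D dvd (x - int r)"
  using iota_eq[of D x "int r"] iota_small[of "int r" D] by simp

lemma iota_range: "0 < D \<Longrightarrow> 1 \<le> iota D x \<and> iota D x \<le> D"
proof -
  assume D: "0 < D"
  have "x mod int D < int D" "0 \<le> x mod int D" using D by auto
  thus ?thesis unfolding iota_def by linarith
qed

lemma iota_surj: "1 \<le> i \<Longrightarrow> i \<le> D \<Longrightarrow> iota D (int i - 1) = i"
  by (subst iota_small) auto

lemma sim_A: assumes "1 \<le> D" shows "letf D r LA (iota D x) = iota D (x + 1)"
proof -
  define m where "m = x mod int D"
  have m: "0 \<le> m" "m < int D" using assms by (auto simp: m_def)
  have ix: "iota D x = nat m + 1" by (simp add: iota_def m_def)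
  have "(x + 1) mod int D = (m + 1) mod int D" by (simp add: m_def mod_add_left_eq)
  show ?thesis
  proof (cases "m + 1 < int D")
    case True
    hence "(x + 1) mod int D = m + 1" using \<open>(x + 1) mod int D = (m + 1) mod int D\<close> m by simp
    thus ?thesis using True m ix by (simp add: iota_def nat_add_distrib)
  next
    case False
    hence "m + 1 = int D" using m by simp
    hence "(x + 1) mod int D = 0" using \<open>(x + 1) mod int D = (m + 1) mod int D\<close> by simp
    have "iota D x = D" using ix \<open>m + 1 = int D\<close> m by (simp add: nat_eq_iff)
    thus ?thesis using \<open>(x + 1) mod int D = 0\<close> by (simp add: iota_def)
  qed
qed

lemma sim_Ai: assumes "1 \<le> D" shows "letf D r LAi (iota D x) = iota D (x - 1)"
proof -
  have "letf D r LAi (letf D r LA (iota D (x - 1))) = iota D (x - 1)"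
    using iota_range[of D "x - 1"] assms by (cases "iota D (x - 1) = D") auto
  moreover have "iota D x = letf D r LA (iota D (x - 1))" using sim_A[OF assms, of r "x - 1"] by simp
  ultimately show ?thesis by simp
qed

lemma sim_B: assumes "1 \<le> r" "2 * r + 1 \<le> D"
  shows "letf D r LB (iota D x) = (if int D dvd x then iota D (int r)
     else if int D dvd (x - int r) then iota D (2 * int r)
     else if int D dvd (x - 2 * int r) then iota D 0 else iota D x)"
  using assms iota_1[of D x] iota_r[of r D x] iota_r[of "2*r" D x]
    iota_small[of "int r" D] iota_small[of "2 * int r" D] iota_small[of 0 D]
  by auto

lemma sim_Bi: assumes "1 \<le> r" "2 * r + 1 \<le> D"
  shows "letf D r LBi (iota D x) = (if int D dvd x then iota D (2 * int r)
     else if int D dvd (x - int r) then iota D 0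
     else if int D dvd (x - 2 * int r) then iota D (int r) else iota D x)"
  using assms iota_1[of D x] iota_r[of r D x] iota_r[of "2*r" D x]
    iota_small[of "int r" D] iota_small[of "2 * int r" D] iota_small[of 0 D]
  by auto


definition tst :: "nat \<Rightarrow> nat \<Rightarrow> int \<Rightarrow> int \<Rightarrow> bool" where
  "tst D r c s \<longleftrightarrow> int D dvd (s + c * int r)"

fun lstep :: "(int \<Rightarrow> int \<Rightarrow> bool) \<Rightarrow> letter \<Rightarrow> int \<times> int \<Rightarrow> int \<times> int" where
  "lstep T LA (j, t) = (j, t + 1)"
| "lstep T LAi (j, t) = (j, t - 1)"
| "lstep T LB (j, t) = (if T j t then (1, 0) else if T (j - 1) t then (2, 0)
     else if T (j - 2) t then (0, 0) else (j, t))"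
| "lstep T LBi (j, t) = (if T j t then (2, 0) else if T (j - 1) t then (0, 0)
     else if T (j - 2) t then (1, 0) else (j, t))"

fun lw :: "(int \<Rightarrow> int \<Rightarrow> bool) \<Rightarrow> letter list \<Rightarrow> int \<times> int \<Rightarrow> int \<times> int" where
  "lw T [] p = p"
| "lw T (c # u) p = lstep T c (lw T u p)"

lemma lstep_props: "fst p \<in> {0,1,2} \<Longrightarrow> fst (lstep T c p) \<in> {0,1,2} \<and> \<bar>snd (lstep T c p)\<bar> \<le> \<bar>snd p\<bar> + 1"
  by (cases p; cases c) auto

lemma lw_props: "fst p \<in> {0,1,2} \<Longrightarrow> fst (lw T u p) \<in> {0,1,2} \<and> \<bar>snd (lw T u p)\<bar> \<le> \<bar>snd p\<bar> + int (length u)"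
proof (induction u)
  case Nil thus ?case by simp
next
  case (Cons c u)
  thus ?case using lstep_props[of "lw T u p" T c] by fastforce
qed

lemma lw_agree:
  assumes "fst p \<in> {0,1,2}"
    and "\<And>c s. \<bar>c\<bar> \<le> 2 \<Longrightarrow> \<bar>s\<bar> \<le> \<bar>snd p\<bar> + int (length u) \<Longrightarrow> T1 c s = T2 c s"
  shows "lw T1 u p = lw T2 u p"
  using assms(2)
proof (induction u)
  case Nil thus ?case by simp
next
  case (Cons c u)
  have IH: "lw T1 u p = lw T2 u p" using Cons.prems by (intro Cons.IH) force
  obtain j t where jt: "lw T2 u p = (j, t)" by fastforce
  have j: "j \<in> {0,1,2}" and t: "\<bar>t\<bar> \<le> \<bar>snd p\<bar> + int (length u)"
    using lw_props[OF assms(1), of T2 u] jt by auto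
  have ag: "\<And>c. \<bar>c\<bar> \<le> 2 \<Longrightarrow> T1 c t = T2 c t" using Cons.prems t by force
  have a0: "T1 j t = T2 j t" and a1: "T1 (j - 1) t = T2 (j - 1) t" and a2: "T1 (j - 2) t = T2 (j - 2) t"
    using j by (auto intro!: ag)
  show ?case using IH jt a0 a1 a2 by (cases c) auto
qed

lemma lw_sim:
  assumes "1 \<le> r" "2 * r + 1 \<le> D" "fst p \<in> {0,1,2}"
  shows "cw D r u (iota D (fst p * int r + snd p)) =
         iota D (fst (lw (tst D r) u p) * int r + snd (lw (tst D r) u p))"
proof (induction u)
  case Nil thus ?case by simp
next
  case (Cons c u)
  obtain j t where jt: "lw (tst D r) u p = (j, t)" by fastforce
  have D1: "1 \<le> D" using assms by simp
  have e: "cw D r (c # u) (iota D (fst p * int r + snd p)) = letf D r c (iota D (j * int r + t))"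
    using Cons jt by simp
  show ?case
  proof (cases c)
    case LA thus ?thesis using e jt sim_A[OF D1, of r "j * int r + t"] by (simp add: algebra_simps)
  next
    case LAi thus ?thesis using e jt sim_Ai[OF D1, of r "j * int r + t"] by (simp add: algebra_simps)
  next
    case LB
    have x1: "int D dvd (j * int r + t) \<longleftrightarrow> tst D r j t" by (simp add: tst_def add.commute)
    have x2: "int D dvd (j * int r + t - int r) \<longleftrightarrow> tst D r (j - 1) t"
      by (simp add: tst_def algebra_simps)
    have x3: "int D dvd (j * int r + t - 2 * int r) \<longleftrightarrow> tst D r (j - 2) t"
      by (simp add: tst_def algebra_simps)
    show ?thesis using LB e jt sim_B[OF assms(1,2), of "j * int r + t"] x1 x2 x3 by auto
  next
    case LBi
    have x1: "int D dvd (j * int r + t) \<longleftrightarrow> tst D r j t" by (simp add: tst_def add.commute)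
    have x2: "int D dvd (j * int r + t - int r) \<longleftrightarrow> tst D r (j - 1) t"
      by (simp add: tst_def algebra_simps)
    have x3: "int D dvd (j * int r + t - 2 * int r) \<longleftrightarrow> tst D r (j - 2) t"
      by (simp add: tst_def algebra_simps)
    show ?thesis using LBi e jt sim_Bi[OF assms(1,2), of "j * int r + t"] x1 x2 x3 by auto
  qed
qed

fun esum :: "letter list \<Rightarrow> int" where
  "esum [] = 0"
| "esum (LA # u) = esum u + 1"
| "esum (LAi # u) = esum u - 1"
| "esum (LB # u) = esum u"
| "esum (LBi # u) = esum u"

lemma esum_bound: "\<bar>esum u\<bar> \<le> int (length u)"
  by (induction u rule: esum.induct) auto

lemma far:
  assumes "1 \<le> r" "2 * r + 1 \<le> D"
    and "\<And>s. \<bar>s\<bar> \<le> int (length u) \<Longrightarrow> \<not> int D dvd (x + s) \<and> \<not> int D dvd (x + s - int r) \<and> \<not> int D dvd (x + s - 2 * int r)"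
  shows "cw D r u (iota D x) = iota D (x + esum u)"
  using assms(3)
proof (induction u rule: esum.induct)
  case 1 thus ?case by simp
next
  case (2 u) thus ?case using sim_A[of D r "x + esum u"] assms(2) by (force simp: algebra_simps)
next
  case (3 u) thus ?case using sim_Ai[of D r "x + esum u"] assms(2) by (force simp: algebra_simps)
next
  case (4 u)
  have IH: "cw D r u (iota D x) = iota D (x + esum u)" using 4 by force
  have "\<not> int D dvd (x + esum u) \<and> \<not> int D dvd (x + esum u - int r) \<and> \<not> int D dvd (x + esum u - 2 * int r)"
    using 4(2)[of "esum u"] esum_bound[of u] by simp
  thus ?case using IH sim_B[OF assms(1,2), of "x + esum u"] by simp
next
  case (5 u)
  have IH: "cw D r u (iota D x) = iota D (x + esum u)" using 5 by force
  have "\<not> int D dvd (x + esum u) \<and> \<not> int D dvd (x + esum u - int r) \<and> \<not> int D dvd (x + esum u - 2 * int r)"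
    using 5(2)[of "esum u"] esum_bound[of u] by simp
  thus ?case using IH sim_Bi[OF assms(1,2), of "x + esum u"] by simp
qed


lemma nodvd: "y \<noteq> 0 \<Longrightarrow> \<bar>y\<bar> < int D \<Longrightarrow> \<not> int D dvd y"
proof
  assume "y \<noteq> 0" "\<bar>y\<bar> < int D" "int D dvd y"
  hence "\<bar>int D\<bar> \<le> \<bar>y\<bar>" using dvd_imp_le_int by blast
  thus False using \<open>\<bar>y\<bar> < int D\<close> by simp
qed

lemma dvd_small: assumes "0 < D" "\<bar>x\<bar> < 2 * D"
  shows "D dvd x \<longleftrightarrow> x = - D \<or> x = 0 \<or> x = (D::int)"
proof
  assume "D dvd x"
  then obtain k where k: "x = D * k" by blast
  have "D * \<bar>k\<bar> < D * 2" using assms k by (simp add: abs_mult)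
  hence "\<bar>k\<bar> < 2" using assms(1) by simp
  hence "k = -1 \<or> k = 0 \<or> k = 1" by arith
  thus "x = - D \<or> x = 0 \<or> x = D" using k by auto
next
  assume "x = - D \<or> x = 0 \<or> x = D"
  thus "D dvd x" by (elim disjE) simp_all
qed

lemma near_fixed:
  assumes "1 \<le> r" "2 * r + 1 \<le> D" "j \<in> {0,1,2}"
  shows "cw D r u (iota D (j * int r + t)) = iota D (j * int r + t) \<longleftrightarrow>
    tst D r (fst (lw (tst D r) u (j, t)) - j) (snd (lw (tst D r) u (j, t)) - t)"
proof -
  obtain j' t' where q: "lw (tst D r) u (j, t) = (j', t')" by fastforce
  have D: "0 < D" using assms by simp
  have "cw D r u (iota D (j * int r + t)) = iota D (j' * int r + t')"
    using lw_sim[OF assms(1,2), of "(j,t)" u] assms(3) q by simp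
  hence "cw D r u (iota D (j * int r + t)) = iota D (j * int r + t) \<longleftrightarrow>
      iota D (j' * int r + t') = iota D (j * int r + t)" by simp
  also have "\<dots> \<longleftrightarrow> int D dvd (j' * int r + t' - (j * int r + t))" by (rule iota_eq[OF D])
  also have "j' * int r + t' - (j * int r + t) = (t' - t) + (j' - j) * int r"
    by (simp add: algebra_simps)
  also have "int D dvd ((t' - t) + (j' - j) * int r) \<longleftrightarrow>
     tst D r (fst (lw (tst D r) u (j, t)) - j) (snd (lw (tst D r) u (j, t)) - t)"
    using q by (simp add: tst_def)
  finally show ?thesis .
qed

definition nearok :: "nat \<Rightarrow> nat \<Rightarrow> letter list \<Rightarrow> nat \<Rightarrow> bool" where
  "nearok D r u L \<longleftrightarrow> (\<forall>j\<in>{0,1,2}. \<forall>t. \<bar>t\<bar> \<le> int L \<longrightarrow>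
      tst D r (fst (lw (tst D r) u (j, t)) - j) (snd (lw (tst D r) u (j, t)) - t))"

lemma char:
  assumes r: "1 \<le> r" "2 * r + 1 \<le> D" and len: "length u \<le> L" and DL: "2 * L < D"
    and x0: "\<And>s. \<bar>s\<bar> \<le> int L \<Longrightarrow> \<not> int D dvd (x0 + s) \<and> \<not> int D dvd (x0 + s - int r) \<and> \<not> int D dvd (x0 + s - 2 * int r)"
  shows "cw D r u = id \<longleftrightarrow> esum u = 0 \<and> nearok D r u L"
proof
  assume h: "cw D r u = id"
  have "cw D r u (iota D x0) = iota D (x0 + esum u)"
    using x0 len by (intro far[OF r]) auto
  hence "iota D x0 = iota D (x0 + esum u)" using h by simp
  hence "int D dvd esum u" using iota_eq[of D x0 "x0 + esum u"] r by simp
  moreover have "\<bar>esum u\<bar> < int D" using esum_bound[of u] len DL by linarith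
  ultimately have "esum u = 0" using nodvd by blast
  moreover have "nearok D r u L"
    unfolding nearok_def
  proof (intro ballI allI impI)
    fix j t assume j: "j \<in> {0::int,1,2}"
    show "tst D r (fst (lw (tst D r) u (j, t)) - j) (snd (lw (tst D r) u (j, t)) - t)"
      using near_fixed[OF r j, of u t] h by simp
  qed
  ultimately show "esum u = 0 \<and> nearok D r u L" by simp
next
  assume h: "esum u = 0 \<and> nearok D r u L"
  show "cw D r u = id"
  proof
    fix i
    show "cw D r u i = id i"
    proof (cases "i = 0 \<or> D < i")
      case True thus ?thesis using cw_out[OF r(2)] by simp
    next
      case False
      define x where "x = int i - 1"
      have ix: "iota D x = i" unfolding x_def using False by (intro iota_surj) auto
      show ?thesis
      proof (cases "\<exists>s k. \<bar>s\<bar> \<le> int L \<and> k \<in> {0,1,2} \<and> int D dvd (x + s - k * int r)")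
        case True
        then obtain s k where sk: "\<bar>s\<bar> \<le> int L" "k \<in> {0,1,2}" "int D dvd (x + s - k * int r)" by blast
        have "iota D x = iota D (k * int r + (- s))"
          using iota_eq[of D x "k * int r + (- s)"] sk r by (simp add: algebra_simps)
        moreover have "cw D r u (iota D (k * int r + (- s))) = iota D (k * int r + (- s))"
        proof -
          have "tst D r (fst (lw (tst D r) u (k, - s)) - k) (snd (lw (tst D r) u (k, - s)) - (- s))"
          proof -
            have hh: "\<forall>j\<in>{0,1,2}. \<forall>t. \<bar>t\<bar> \<le> int L \<longrightarrow>
              tst D r (fst (lw (tst D r) u (j, t)) - j) (snd (lw (tst D r) u (j, t)) - t)"
              using h unfolding nearok_def by blast
            have "\<forall>t. \<bar>t\<bar> \<le> int L \<longrightarrow>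
              tst D r (fst (lw (tst D r) u (k, t)) - k) (snd (lw (tst D r) u (k, t)) - t)"
              using hh sk(2) by blast
            thus ?thesis using sk(1) by (metis abs_minus_cancel)
          qed
          thus ?thesis using near_fixed[OF r sk(2), of u "- s"] by simp
        qed
        ultimately show ?thesis using ix by simp
      next
        case False
        have "cw D r u (iota D x) = iota D (x + esum u)"
        proof (rule far[OF r])
          fix s assume "\<bar>s\<bar> \<le> int (length u)"
          hence "\<bar>s\<bar> \<le> int L" using len by linarith
          thus "\<not> int D dvd (x + s) \<and> \<not> int D dvd (x + s - int r) \<and> \<not> int D dvd (x + s - 2 * int r)"
          proof -
            have nk: "\<And>k. k \<in> {0,1,2} \<Longrightarrow> \<not> int D dvd (x + s - k * int r)"
              using False \<open>\<bar>s\<bar> \<le> int L\<close> by blast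
            show ?thesis using nk[of 0] nk[of 1] nk[of 2] by simp
          qed
        qed
        thus ?thesis using ix h by simp
      qed
    qed
  qed
qed

lemma far_exists:
  assumes "1 \<le> r" "1 \<le> g" "2 * L + 2 \<le> r \<or> 2 * L + 2 \<le> g"
  shows "\<exists>x0. \<forall>s. \<bar>s\<bar> \<le> int L \<longrightarrow> \<not> int (2*r+g) dvd (x0 + s) \<and> \<not> int (2*r+g) dvd (x0 + s - int r) \<and> \<not> int (2*r+g) dvd (x0 + s - 2 * int r)"
proof (cases "2 * L + 2 \<le> r")
  case True
  show ?thesis
  proof (intro exI allI impI)
    fix s :: int assume s: "\<bar>s\<bar> \<le> int L"
    let ?x = "int L + 1"
    show "\<not> int (2*r+g) dvd (?x + s) \<and> \<not> int (2*r+g) dvd (?x + s - int r) \<and> \<not> int (2*r+g) dvd (?x + s - 2 * int r)"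
      using s True assms by (intro conjI nodvd) auto
  qed
next
  case False
  hence g: "2 * L + 2 \<le> g" using assms by simp
  show ?thesis
  proof (intro exI allI impI)
    fix s :: int assume s: "\<bar>s\<bar> \<le> int L"
    let ?x = "2 * int r + int L + 1"
    show "\<not> int (2*r+g) dvd (?x + s) \<and> \<not> int (2*r+g) dvd (?x + s - int r) \<and> \<not> int (2*r+g) dvd (?x + s - 2 * int r)"
      using s g assms by (intro conjI nodvd) auto
  qed
qed

lemma test_agree:
  fixes r1 g1 r2 g2 K M :: nat and c s :: int
  assumes "1 \<le> r1" "1 \<le> g1" "1 \<le> r2" "1 \<le> g2"
    and "r1 = r2 \<or> (K \<le> r1 \<and> K \<le> r2)" "g1 = g2 \<or> (K \<le> g1 \<and> K \<le> g2)"
    and "2 * M < K" "\<bar>s\<bar> \<le> int M" "\<bar>c\<bar> \<le> 2"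
  shows "tst (2*r1+g1) r1 c s \<longleftrightarrow> tst (2*r2+g2) r2 c s"
proof (cases "r1 = r2 \<and> g1 = g2")
  case True thus ?thesis by simp
next
  case False
  hence K1: "K \<le> 2*r1+g1" "K \<le> 2*r2+g2" using assms by auto
  have c: "c \<in> {-2,-1,0,1,2}" using assms(9) by auto
  have e1: "tst (2*r1+g1) r1 c s \<longleftrightarrow> (s + c * int r1 = - int (2*r1+g1) \<or> s + c * int r1 = 0 \<or> s + c * int r1 = int (2*r1+g1))"
    unfolding tst_def using assms K1 c by (intro dvd_small) auto
  have e2: "tst (2*r2+g2) r2 c s \<longleftrightarrow> (s + c * int r2 = - int (2*r2+g2) \<or> s + c * int r2 = 0 \<or> s + c * int r2 = int (2*r2+g2))"
    unfolding tst_def using assms K1 c by (intro dvd_small) auto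
  have A: "\<bar>s\<bar> < int K" "int K \<le> int (2*r1+g1)" "int K \<le> int (2*r2+g2)" using assms K1 by auto
  have B: "int r1 = int r2 \<or> (int K \<le> int r1 \<and> int K \<le> int r2)"
          "int g1 = int g2 \<or> (int K \<le> int g1 \<and> int K \<le> int g2)" using assms(5,6) by auto
  have C: "2 * \<bar>s\<bar> < int K" using assms(7,8) by linarith
  have "(s + c * int r1 = - int (2*r1+g1) \<or> s + c * int r1 = 0 \<or> s + c * int r1 = int (2*r1+g1)) \<longleftrightarrow>
     (s + c * int r2 = - int (2*r2+g2) \<or> s + c * int r2 = 0 \<or> s + c * int r2 = int (2*r2+g2))"
     using c
  proof (elim insertE emptyE)
    assume "c = -2" thus ?thesis using A B C by auto
  next
    assume "c = -1" thus ?thesis using A B C by auto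
  next
    assume "c = 0" thus ?thesis using A B C by auto
  next
    assume "c = 1" thus ?thesis using A B C by auto
  next
    assume "c = 2" thus ?thesis using A B C by auto
  qed
  thus ?thesis using e1 e2 by simp
qed


lemma comp_equiv:
  fixes r g K L :: nat
  assumes r: "1 \<le> r" and g: "1 \<le> g" and K: "6 * L + 2 \<le> K" and len: "length u \<le> L"
  shows "cw (2*r+g) r u = id \<longleftrightarrow> cw (2 * min r K + min g K) (min r K) u = id"
proof (cases "r < K \<and> g < K")
  case True thus ?thesis by simp
next
  case False
  define r2 where "r2 = min r K"
  define g2 where "g2 = min g K"
  have r2: "1 \<le> r2" "r = r2 \<or> (K \<le> r \<and> K \<le> r2)" using r K by (auto simp: r2_def)
  have g2: "1 \<le> g2" "g = g2 \<or> (K \<le> g \<and> K \<le> g2)" using g K by (auto simp: g2_def)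
  have big1: "2 * L + 2 \<le> r \<or> 2 * L + 2 \<le> g" using False K by auto
  have big2: "2 * L + 2 \<le> r2 \<or> 2 * L + 2 \<le> g2" using False K by (auto simp: r2_def g2_def)
  obtain x1 where x1: "\<forall>s. \<bar>s\<bar> \<le> int L \<longrightarrow> \<not> int (2*r+g) dvd (x1 + s) \<and> \<not> int (2*r+g) dvd (x1 + s - int r) \<and> \<not> int (2*r+g) dvd (x1 + s - 2 * int r)"
    using far_exists[OF r g big1] by blast
  obtain x2 where x2: "\<forall>s. \<bar>s\<bar> \<le> int L \<longrightarrow> \<not> int (2*r2+g2) dvd (x2 + s) \<and> \<not> int (2*r2+g2) dvd (x2 + s - int r2) \<and> \<not> int (2*r2+g2) dvd (x2 + s - 2 * int r2)"
    using far_exists[OF r2(1) g2(1) big2] by blast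
  have c1: "cw (2*r+g) r u = id \<longleftrightarrow> esum u = 0 \<and> nearok (2*r+g) r u L"
    using x1 by (intro char[OF r _ len]) (use big1 g in auto)
  have c2: "cw (2*r2+g2) r2 u = id \<longleftrightarrow> esum u = 0 \<and> nearok (2*r2+g2) r2 u L"
    using x2 by (intro char[OF r2(1) _ len]) (use big2 g2 in auto)
  have ta: "\<And>c s. \<bar>c\<bar> \<le> 2 \<Longrightarrow> \<bar>s\<bar> \<le> int (3 * L) \<Longrightarrow> tst (2*r+g) r c s = tst (2*r2+g2) r2 c s"
    by (rule test_agree[OF r g r2(1) g2(1) r2(2) g2(2), where M = "3 * L"]) (use K in auto)
  have "nearok (2*r+g) r u L \<longleftrightarrow> nearok (2*r2+g2) r2 u L"
    unfolding nearok_def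
  proof (intro ball_cong refl all_cong imp_cong)
    fix j :: int and t :: int assume j: "j \<in> {0,1,2}" and t: "\<bar>t\<bar> \<le> int L"
    have eq: "lw (tst (2*r+g) r) u (j, t) = lw (tst (2*r2+g2) r2) u (j, t)"
    proof (rule lw_agree)
      show "fst (j, t) \<in> {0,1,2}" using j by simp
      fix c s :: int assume "\<bar>c\<bar> \<le> 2" "\<bar>s\<bar> \<le> \<bar>snd (j, t)\<bar> + int (length u)"
      thus "tst (2*r+g) r c s = tst (2*r2+g2) r2 c s" using t len by (intro ta) auto
    qed
    obtain j' t' where q: "lw (tst (2*r+g) r) u (j, t) = (j', t')" by fastforce
    have pr: "j' \<in> {0,1,2}" "\<bar>t'\<bar> \<le> \<bar>t\<bar> + int (length u)"
      using lw_props[of "(j,t)" "tst (2*r+g) r" u] j q by auto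
    have "tst (2*r+g) r (j' - j) (t' - t) = tst (2*r2+g2) r2 (j' - j) (t' - t)"
      using pr j t len by (intro ta) auto
    thus "tst (2*r+g) r (fst (lw (tst (2*r+g) r) u (j, t)) - j) (snd (lw (tst (2*r+g) r) u (j, t)) - t) =
          tst (2*r2+g2) r2 (fst (lw (tst (2*r2+g2) r2) u (j, t)) - j) (snd (lw (tst (2*r2+g2) r2) u (j, t)) - t)"
      by (simp only: eq[symmetric] q fst_conv snd_conv)
  qed
  thus ?thesis using c1 c2 by (simp add: r2_def g2_def)
qed


definition evl :: "(nat \<Rightarrow> nat) \<Rightarrow> (nat \<Rightarrow> nat) \<Rightarrow> letter \<Rightarrow> pelem" where
  "evl d r c = (case c of LA \<Rightarrow> alpha_seq d | LB \<Rightarrow> beta_seq r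
     | LAi \<Rightarrow> pinv (alpha_seq d) | LBi \<Rightarrow> pinv (beta_seq r))"

definition evalG :: "(nat \<Rightarrow> nat) \<Rightarrow> (nat \<Rightarrow> nat) \<Rightarrow> letter list \<Rightarrow> pelem" where
  "evalG d r u = foldr pmult (map (evl d r) u) pone"

lemma alpha_comp: "alpha_seq d n = (if n = 0 then id else letf (d n) (r n) LA)"
  by (auto simp: alpha_seq_def fun_eq_iff)

lemma beta_comp: "beta_seq r n = (if n = 0 then id else letf (d n) (r n) LB)"
  by (auto simp: beta_seq_def fun_eq_iff)

lemma inv_letf: assumes "1 \<le> r" "2 * r + 1 \<le> D"
  shows "Hilbert_Choice.inv (letf D r c) = letf D r (invl c)"
  by (rule inv_unique_comp) (use letf_inv[OF assms] letf_inv'[OF assms] in \<open>auto simp: fun_eq_iff\<close>)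

lemma evl_comp:
  assumes "\<forall>n\<ge>1. 1 \<le> r n \<and> 2 * r n + 1 \<le> d n"
  shows "evl d r c n = (if n = 0 then id else letf (d n) (r n) c)"
proof (cases "n = 0")
  case True thus ?thesis
    by (cases c) (auto simp: evl_def pinv_def alpha_seq_def beta_seq_def fun_eq_iff inv_id[unfolded id_def])
next
  case False
  hence h: "1 \<le> r n" "2 * r n + 1 \<le> d n" using assms by auto
  show ?thesis
  proof (cases c)
    case LA thus ?thesis using alpha_comp[of d n r] False by (simp add: evl_def)
  next
    case LB thus ?thesis using beta_comp[of r n d] False by (simp add: evl_def)
  next
    case LAi thus ?thesis using alpha_comp[of d n r] False inv_letf[OF h, of LA] by (simp add: evl_def pinv_def)
  next
    case LBi thus ?thesis using beta_comp[of r n d] False inv_letf[OF h, of LB] by (simp add: evl_def pinv_def)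
  qed
qed

lemma evalG_comp:
  assumes "\<forall>n\<ge>1. 1 \<le> r n \<and> 2 * r n + 1 \<le> d n"
  shows "evalG d r u n = (if n = 0 then id else cw (d n) (r n) u)"
proof (induction u)
  case Nil thus ?case by (simp add: evalG_def pone_def)
next
  case (Cons c u)
  have "evalG d r (c # u) n = evl d r c n \<circ> evalG d r u n" by (simp add: evalG_def pmult_def)
  thus ?case using Cons evl_comp[OF assms, of c n] by simp
qed

lemma ball_word:
  assumes "g \<in> word_ball {alpha_seq d, beta_seq r} l"
  shows "\<exists>u. length u \<le> l \<and> evalG d r u = g"
proof -
  obtain w where w: "g = foldr pmult w pone" "length w \<le> l"
    "set w \<subseteq> {alpha_seq d, beta_seq r} \<union> pinv ` {alpha_seq d, beta_seq r}"
    using assms unfolding word_ball_def by blast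
  have ex: "\<And>x. x \<in> set w \<Longrightarrow> \<exists>c. evl d r c = x"
  proof -
    fix x assume "x \<in> set w"
    hence "x = alpha_seq d \<or> x = beta_seq r \<or> x = pinv (alpha_seq d) \<or> x = pinv (beta_seq r)"
      using w(3) by auto
    thus "\<exists>c. evl d r c = x"
      by (elim disjE) (auto simp: evl_def intro: exI[of _ LA] exI[of _ LB] exI[of _ LAi] exI[of _ LBi])
  qed
  define u where "u = map (\<lambda>x. SOME c. evl d r c = x) w"
  have "map (evl d r) u = w"
    unfolding u_def map_map by (rule map_idI) (use ex in \<open>auto intro: someI_ex\<close>)
  thus ?thesis using w by (intro exI[of _ u]) (auto simp: evalG_def u_def)
qed


definition Qcar :: "(nat \<Rightarrow> nat) \<Rightarrow> nat \<Rightarrow> pelem set" where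
  "Qcar dc K = {f. \<forall>n. ((n = 0 \<or> K < n) \<longrightarrow> f n = id) \<and> ((1 \<le> n \<and> n \<le> K) \<longrightarrow> f n permutes {1..dc n})}"

definition Qgrp :: "(nat \<Rightarrow> nat) \<Rightarrow> nat \<Rightarrow> pelem monoid" where
  "Qgrp dc K = \<lparr>carrier = Qcar dc K, monoid.mult = pmult, one = pone\<rparr>"

lemma Qgrp_group: "group (Qgrp dc K)"
proof (rule groupI)
  fix x y assume "x \<in> carrier (Qgrp dc K)" "y \<in> carrier (Qgrp dc K)"
  thus "x \<otimes>\<^bsub>Qgrp dc K\<^esub> y \<in> carrier (Qgrp dc K)"
    by (auto simp: Qgrp_def Qcar_def pmult_def intro: permutes_compose)
next
  show "\<one>\<^bsub>Qgrp dc K\<^esub> \<in> carrier (Qgrp dc K)"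
    by (auto simp: Qgrp_def Qcar_def pone_def permutes_id)
next
  fix x y z assume "x \<in> carrier (Qgrp dc K)" "y \<in> carrier (Qgrp dc K)" "z \<in> carrier (Qgrp dc K)"
  show "x \<otimes>\<^bsub>Qgrp dc K\<^esub> y \<otimes>\<^bsub>Qgrp dc K\<^esub> z = x \<otimes>\<^bsub>Qgrp dc K\<^esub> (y \<otimes>\<^bsub>Qgrp dc K\<^esub> z)"
    by (simp add: Qgrp_def pmult_def comp_assoc)
next
  fix x assume "x \<in> carrier (Qgrp dc K)"
  show "\<one>\<^bsub>Qgrp dc K\<^esub> \<otimes>\<^bsub>Qgrp dc K\<^esub> x = x"
    by (simp add: Qgrp_def pmult_def pone_def)
next
  fix x assume x: "x \<in> carrier (Qgrp dc K)"
  define y where "y = (\<lambda>n. Hilbert_Choice.inv (x n))"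
  have "y \<in> carrier (Qgrp dc K)"
    using x by (auto simp: Qgrp_def Qcar_def y_def inv_id permutes_inv)
  moreover have "y \<otimes>\<^bsub>Qgrp dc K\<^esub> x = \<one>\<^bsub>Qgrp dc K\<^esub>"
  proof -
    have "\<And>n. Hilbert_Choice.inv (x n) \<circ> x n = id"
    proof -
      fix n
      show "Hilbert_Choice.inv (x n) \<circ> x n = id"
      proof (cases "n = 0 \<or> K < n")
        case True thus ?thesis using x by (auto simp: Qgrp_def Qcar_def inv_id)
      next
        case False
        hence "x n permutes {1..dc n}" using x by (auto simp: Qgrp_def Qcar_def)
        thus ?thesis by (rule permutes_inv_o(2))
      qed
    qed
    thus ?thesis by (simp add: Qgrp_def pmult_def pone_def y_def fun_eq_iff)
  qed
  ultimately show "\<exists>y\<in>carrier (Qgrp dc K). y \<otimes>\<^bsub>Qgrp dc K\<^esub> x = \<one>\<^bsub>Qgrp dc K\<^esub>" by blast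
qed

lemma Qcar_finite_card:
  assumes "\<And>n. dc n \<le> B"
  shows "finite (Qcar dc K) \<and> card (Qcar dc K) \<le> fact B ^ K"
proof -
  define P where "P = (\<Pi>\<^sub>E n\<in>{1..K}. {p. p permutes {1..dc n}})"
  define R where "R = (\<lambda>f::pelem. restrict f {1..K})"
  have fP: "finite P" unfolding P_def by (intro finite_PiE) (auto intro: finite_permutations)
  have inj: "inj_on R (Qcar dc K)"
  proof (rule inj_onI)
    fix f g assume f: "f \<in> Qcar dc K" and g: "g \<in> Qcar dc K" and e: "R f = R g"
    show "f = g"
    proof
      fix n show "f n = g n"
      proof (cases "n = 0 \<or> K < n")
        case True thus ?thesis using f g by (auto simp: Qcar_def)
      next
        case False thus ?thesis using fun_cong[OF e, of n] by (auto simp: R_def)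
      qed
    qed
  qed
  have sub: "R ` Qcar dc K \<subseteq> P" by (auto simp: R_def P_def Qcar_def)
  have fin: "finite (Qcar dc K)" using finite_imageD[OF finite_subset[OF sub fP] inj] .
  have "card (Qcar dc K) = card (R ` Qcar dc K)" using card_image[OF inj] by simp
  also have "\<dots> \<le> card P" by (rule card_mono[OF fP sub])
  also have "card P = (\<Prod>n\<in>{1..K}. fact (dc n))"
    unfolding P_def by (simp add: card_PiE card_permutations)
  also have "\<dots> \<le> (\<Prod>n\<in>{1..K}. fact B)"
    by (intro prod_mono) (auto intro: fact_mono assms)
  also have "\<dots> = fact B ^ K" by simp
  finally show ?thesis using fin by simp
qed


lemma main_emb:
  fixes d r :: "nat \<Rightarrow> nat" and l K :: nat
  assumes hyp: "\<forall>n\<ge>1. n \<le> r n \<and> n \<le> d n - 2 * r n \<and> 2 * r n + 1 \<le> d n"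
    and Kdef: "K = 18 * l + 2"
  defines "rc \<equiv> (\<lambda>n. min (r n) K)"
    and "dc \<equiv> (\<lambda>n. 2 * min (r n) K + min (d n - 2 * r n) K)"
  shows "\<exists>\<psi>. local_embedding pmult (word_ball {alpha_seq d, beta_seq r} l) (Qgrp dc K) \<psi>"
proof -
  have hyp1: "\<forall>n\<ge>1. 1 \<le> r n \<and> 2 * r n + 1 \<le> d n" using hyp by fastforce
  have hypc: "\<forall>n\<ge>1. 1 \<le> rc n \<and> 2 * rc n + 1 \<le> dc n"
  proof (intro allI impI)
    fix n :: nat assume n: "1 \<le> n"
    hence "n \<le> r n" "n \<le> d n - 2 * r n" using hyp by auto
    thus "1 \<le> rc n \<and> 2 * rc n + 1 \<le> dc n" using n Kdef by (auto simp: rc_def dc_def)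
  qed
  have hA: "cw (d n) (r n) u = id \<longleftrightarrow> cw (dc n) (rc n) u = id"
    if n: "1 \<le> n" and len: "length u \<le> 3 * l" for n u
  proof -
    have a: "1 \<le> r n" "1 \<le> d n - 2 * r n" "2 * r n + 1 \<le> d n" using hyp n by fastforce+
    have "d n = 2 * r n + (d n - 2 * r n)" using a by simp
    hence "cw (d n) (r n) u = cw (2 * r n + (d n - 2 * r n)) (r n) u" by simp
    thus ?thesis using comp_equiv[OF a(1,2), of "3 * l" K u] len Kdef
      by (simp add: rc_def dc_def)
  qed
  have hB: "rc n = rc K \<and> dc n = dc K" if n: "K < n" for n
  proof -
    have K1: "1 \<le> K" using Kdef by simp
    have "n \<le> r n" "n \<le> d n - 2 * r n" using hyp n K1 by auto
    moreover have "K \<le> r K" "K \<le> d K - 2 * r K" using hyp K1 by auto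
    ultimately show ?thesis using n by (simp add: rc_def dc_def)
  qed
  have triv_all: "\<forall>n\<ge>1. cw (d n) (r n) w = id"
    if len: "length w \<le> 3 * l" and t: "\<forall>n. 1 \<le> n \<and> n \<le> K \<longrightarrow> cw (dc n) (rc n) w = id" for w
  proof (intro allI impI)
    fix n :: nat assume n: "1 \<le> n"
    show "cw (d n) (r n) w = id"
    proof (cases "n \<le> K")
      case True thus ?thesis using hA[OF n len] t n by simp
    next
      case False
      hence "cw (dc n) (rc n) w = id" using hB[of n] t Kdef by simp
      thus ?thesis using hA[OF n len] by simp
    qed
  qed
  define wd where "wd g = (SOME u. length u \<le> l \<and> evalG d r u = g)" for g
  let ?A = "word_ball {alpha_seq d, beta_seq r} l"
  have wd: "length (wd g) \<le> l \<and> evalG d r (wd g) = g" if "g \<in> ?A" for g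
    unfolding wd_def using ball_word[OF that] by (rule someI_ex)
  define \<psi> where "\<psi> g = (\<lambda>n. if 1 \<le> n \<and> n \<le> K then cw (dc n) (rc n) (wd g) else id)" for g
  have Gcomp: "g n = cw (d n) (r n) (wd g)" if "g \<in> ?A" "1 \<le> n" for g n
    using wd[OF that(1)] evalG_comp[OF hyp1, of "wd g" n] that(2) by auto
  have G0: "g 0 = id" if "g \<in> ?A" for g
    using wd[OF that(1)] evalG_comp[OF hyp1, of "wd g" 0] by auto
  have "local_embedding pmult ?A (Qgrp dc K) \<psi>"
    unfolding local_embedding_def
  proof (intro conjI)
    show "\<psi> ` ?A \<subseteq> carrier (Qgrp dc K)"
    proof
      fix x assume "x \<in> \<psi> ` ?A"
      then obtain g where x: "x = \<psi> g" by blast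
      have pm: "cw (dc n) (rc n) (wd g) permutes {1..dc n}" if "1 \<le> n" for n
        using hypc that by (intro cw_permutes) auto
      show "x \<in> carrier (Qgrp dc K)"
        unfolding x Qgrp_def Qcar_def \<psi>_def
        using pm by auto
    qed
  next
    show "inj_on \<psi> ?A"
    proof (rule inj_onI)
      fix g h assume g: "g \<in> ?A" and h: "h \<in> ?A" and e: "\<psi> g = \<psi> h"
      define w where "w = invw (wd g) @ wd h"
      have len: "length w \<le> 3 * l" using wd[OF g] wd[OF h] by (simp add: w_def)
      have "\<forall>n. 1 \<le> n \<and> n \<le> K \<longrightarrow> cw (dc n) (rc n) w = id"
      proof (intro allI impI)
        fix n :: nat assume n: "1 \<le> n \<and> n \<le> K"
        have "cw (dc n) (rc n) (wd g) = cw (dc n) (rc n) (wd h)"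
          using fun_cong[OF e, of n] n by (simp add: \<psi>_def)
        thus "cw (dc n) (rc n) w = id" unfolding w_def
          using cw_eq_iff[of "rc n" "dc n"] hypc n by auto
      qed
      hence all: "\<forall>n\<ge>1. cw (d n) (r n) w = id" using triv_all[OF len] by blast
      show "g = h"
      proof
        fix n show "g n = h n"
        proof (cases "n = 0")
          case True thus ?thesis using G0[OF g] G0[OF h] by simp
        next
          case False
          hence n: "1 \<le> n" by simp
          have "cw (d n) (r n) (wd g) = cw (d n) (r n) (wd h)"
            using all n cw_eq_iff[of "r n" "d n"] hyp1 unfolding w_def by auto
          thus ?thesis using Gcomp[OF g n] Gcomp[OF h n] by simp
        qed
      qed
    qed
  next
    show "\<forall>g\<in>?A. \<forall>h\<in>?A. pmult g h \<in> ?A \<longrightarrow> \<psi> (pmult g h) = \<psi> g \<otimes>\<^bsub>Qgrp dc K\<^esub> \<psi> h"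
    proof (intro ballI impI)
      fix g h assume g: "g \<in> ?A" and h: "h \<in> ?A" and gh: "pmult g h \<in> ?A"
      define w where "w = invw (wd (pmult g h)) @ (wd g @ wd h)"
      have len: "length w \<le> 3 * l" using wd[OF g] wd[OF h] wd[OF gh] by (simp add: w_def)
      have eqn: "cw (dc n) (rc n) (wd (pmult g h)) = cw (dc n) (rc n) (wd g) \<circ> cw (dc n) (rc n) (wd h)"
        if n: "1 \<le> n" for n
      proof -
        have "cw (d n) (r n) (wd (pmult g h)) = cw (d n) (r n) (wd g @ wd h)"
          using Gcomp[OF gh n] Gcomp[OF g n] Gcomp[OF h n] by (simp add: pmult_def cw_append)
        hence "cw (d n) (r n) w = id" unfolding w_def using cw_eq_iff[of "r n" "d n"] hyp1 n by auto
        hence "cw (dc n) (rc n) w = id" using hA[OF n len] by simp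
        hence "cw (dc n) (rc n) (wd (pmult g h)) = cw (dc n) (rc n) (wd g @ wd h)"
          unfolding w_def using cw_eq_iff[of "rc n" "dc n"] hypc n by auto
        thus ?thesis by (simp add: cw_append)
      qed
      show "\<psi> (pmult g h) = \<psi> g \<otimes>\<^bsub>Qgrp dc K\<^esub> \<psi> h"
      proof -
        have pt: "\<psi> (pmult g h) n = \<psi> g n \<circ> \<psi> h n" for n
          by (auto simp: \<psi>_def eqn)
        show ?thesis unfolding Qgrp_def monoid.simps pmult_def[of "\<psi> g" "\<psi> h"]
          using pt by (simp add: fun_eq_iff)
      qed
    qed
  qed
  thus ?thesis by blast
qed


lemma transfer_nat:
  fixes G :: "'b monoid" and mul :: "'a \<Rightarrow> 'a \<Rightarrow> 'a"
  assumes grp: "group G" and fin: "finite (carrier G)" and le: "local_embedding mul A G \<psi>"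
  shows "\<exists>(Q :: nat monoid) \<psi>'. group Q \<and> finite (carrier Q) \<and> order Q = order G \<and> local_embedding mul A Q \<psi>'"
proof -
  define N where "N = card (carrier G)"
  obtain h where bij: "bij_betw h {0..<N} (carrier G)"
    using ex_bij_betw_nat_finite[OF fin] unfolding N_def by blast
  define h' where "h' = inv_into {0..<N} h"
  have hc: "a \<in> {0..<N} \<Longrightarrow> h a \<in> carrier G" for a by (rule bij_betw_apply[OF bij])
  have h'c: "y \<in> carrier G \<Longrightarrow> h' y \<in> {0..<N}" for y
    unfolding h'_def by (rule bij_betw_apply[OF bij_betw_inv_into[OF bij]])
  have hh': "y \<in> carrier G \<Longrightarrow> h (h' y) = y" for y
    unfolding h'_def by (rule bij_betw_inv_into_right[OF bij])
  have h'h: "a \<in> {0..<N} \<Longrightarrow> h' (h a) = a" for a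
    unfolding h'_def by (rule bij_betw_inv_into_left[OF bij])
  define Q :: "nat monoid" where "Q = \<lparr>carrier = {0..<N}, monoid.mult = (\<lambda>a b. h' (h a \<otimes>\<^bsub>G\<^esub> h b)), one = h' \<one>\<^bsub>G\<^esub>\<rparr>"
  interpret G: group G by (rule grp)
  have gQ: "group Q"
  proof (rule groupI)
    fix x y assume "x \<in> carrier Q" "y \<in> carrier Q"
    thus "x \<otimes>\<^bsub>Q\<^esub> y \<in> carrier Q" unfolding Q_def using hc h'c by simp
  next
    show "\<one>\<^bsub>Q\<^esub> \<in> carrier Q" unfolding Q_def using h'c by simp
  next
    fix x y z assume "x \<in> carrier Q" "y \<in> carrier Q" "z \<in> carrier Q"
    thus "x \<otimes>\<^bsub>Q\<^esub> y \<otimes>\<^bsub>Q\<^esub> z = x \<otimes>\<^bsub>Q\<^esub> (y \<otimes>\<^bsub>Q\<^esub> z)"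
      unfolding Q_def using hc hh' by (simp add: G.m_assoc)
  next
    fix x assume "x \<in> carrier Q"
    thus "\<one>\<^bsub>Q\<^esub> \<otimes>\<^bsub>Q\<^esub> x = x" unfolding Q_def using hc hh' h'h by simp
  next
    fix x assume x: "x \<in> carrier Q"
    show "\<exists>y\<in>carrier Q. y \<otimes>\<^bsub>Q\<^esub> x = \<one>\<^bsub>Q\<^esub>"
    proof (intro bexI)
      show "h' (inv\<^bsub>G\<^esub> h x) \<in> carrier Q" using x hc h'c unfolding Q_def by simp
      show "h' (inv\<^bsub>G\<^esub> h x) \<otimes>\<^bsub>Q\<^esub> x = \<one>\<^bsub>Q\<^esub>" using x hc hh' unfolding Q_def by simp
    qed
  qed
  have ord: "order Q = order G" unfolding order_def Q_def N_def by simp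
  have le': "local_embedding mul A Q (h' \<circ> \<psi>)"
  proof -
    have inj: "inj_on \<psi> A" and im: "\<psi> ` A \<subseteq> carrier G"
      and m: "\<forall>g\<in>A. \<forall>k\<in>A. mul g k \<in> A \<longrightarrow> \<psi> (mul g k) = \<psi> g \<otimes>\<^bsub>G\<^esub> \<psi> k"
      using le unfolding local_embedding_def by auto
    have injh': "inj_on h' (carrier G)" using hh' by (metis inj_onI)
    show ?thesis unfolding local_embedding_def
    proof (intro conjI)
      show "inj_on (h' \<circ> \<psi>) A" using comp_inj_on[OF inj inj_on_subset[OF injh' im]] .
      show "(h' \<circ> \<psi>) ` A \<subseteq> carrier Q" using im h'c unfolding Q_def by auto
      show "\<forall>g\<in>A. \<forall>k\<in>A. mul g k \<in> A \<longrightarrow> (h' \<circ> \<psi>) (mul g k) = (h' \<circ> \<psi>) g \<otimes>\<^bsub>Q\<^esub> (h' \<circ> \<psi>) k"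
      proof (intro ballI impI)
        fix g k assume gk: "g \<in> A" "k \<in> A" "mul g k \<in> A"
        have "\<psi> g \<in> carrier G" "\<psi> k \<in> carrier G" using im gk by auto
        thus "(h' \<circ> \<psi>) (mul g k) = (h' \<circ> \<psi>) g \<otimes>\<^bsub>Q\<^esub> (h' \<circ> \<psi>) k"
          using m gk hh' unfolding Q_def by simp
      qed
    qed
  qed
  show ?thesis using gQ ord le' fin unfolding Q_def by (intro exI[of _ Q] exI[of _ "h' \<circ> \<psi>"]) (auto simp: Q_def)
qed

lemma numeric:
  fixes l :: nat assumes l: "2 \<le> l"
  shows "real (fact (3 * (18 * l + 2)) ^ (18 * l + 2)) \<le> exp (8000 * (real l)\<^sup>2 * ln (real l))"
proof -
  define K where "K = 18 * l + 2"
  define m where "m = 3 * K * K"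
  define y where "y = real (3 * K)"
  have K19: "K \<le> 19 * l" using l by (simp add: K_def)
  have f: "fact (3 * K) \<le> (3 * K) ^ (3 * K)" using fact_le_power[of "3 * K", where 'a = nat] by simp
  have "fact (3 * K) ^ K \<le> ((3 * K) ^ (3 * K)) ^ K" by (rule power_mono[OF f]) simp
  also have "\<dots> = (3 * K) ^ m" by (simp add: power_mult m_def)
  finally have n1: "real (fact (3 * K) ^ K) \<le> y ^ m"
    unfolding y_def by (metis of_nat_le_iff of_nat_power)
  have pos: "0 < y" by (simp add: K_def y_def)
  have "y ^ m = exp (ln (y ^ m))" using pos by simp
  also have "ln (y ^ m) = real m * ln y" by (rule ln_realpow)
  also have "exp (real m * ln y) \<le> exp (8000 * (real l)\<^sup>2 * ln (real l))"
  proof (rule exp_mono)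
    have l64: "2 ^ 6 \<le> l ^ 6" using power_mono[of 2 l 6] l by simp
    have "l * 64 \<le> l * l ^ 6" using mult_le_mono2[OF l64, of l] by simp
    moreover have "3 * K \<le> l * 64" using l unfolding K_def by simp
    ultimately have "3 * K \<le> l * l ^ 6" by (rule le_trans[rotated])
    hence "3 * K \<le> l ^ 7" by (simp add: power_Suc[symmetric])
    hence y7: "y \<le> real l ^ 7" unfolding y_def by (metis of_nat_le_iff of_nat_power)
    have lp: "0 < real l" using l by simp
    have "ln y \<le> ln (real l ^ 7)" using y7 pos lp by (subst ln_le_cancel_iff) auto
    hence lnK: "ln y \<le> 7 * ln (real l)" using ln_realpow[of "real l" 7] by simp
    have lnpos: "0 \<le> ln y" using pos unfolding y_def K_def by simp
    have "m \<le> 3 * (19 * l) * (19 * l)" unfolding m_def using K19 by (intro mult_mono) auto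
    hence "m \<le> 1083 * l ^ 2" by (simp add: power2_eq_square)
    hence kk: "real m \<le> 1083 * (real l)\<^sup>2" by (metis of_nat_le_iff of_nat_mult of_nat_numeral of_nat_power)
    have lnl: "0 \<le> ln (real l)" using l by simp
    have "real m * ln y \<le> (1083 * (real l)\<^sup>2) * (7 * ln (real l))"
      by (intro mult_mono kk lnK lnpos) (use lnl in auto)
    also have "\<dots> \<le> 8000 * (real l)\<^sup>2 * ln (real l)" using lnl by (simp add: mult_right_mono)
    finally show "real m * ln y \<le> 8000 * (real l)\<^sup>2 * ln (real l)" .
  qed
  finally show ?thesis using n1 unfolding K_def by linarith
qed


theorem proposition3p11:
  shows "\<exists>C::real > 0. \<forall>(d :: nat \<Rightarrow> nat) (r :: nat \<Rightarrow> nat).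
     (\<forall>m n. 1 \<le> m \<longrightarrow> m \<le> n \<longrightarrow> d m \<le> d n) \<and>
     (\<forall>n\<ge>1. odd (d n) \<and> d n \<ge> 5 \<and> d n \<ge> 2 * r n + 1 \<and> r n \<ge> n \<and> d n - 2 * r n \<ge> n)
     \<longrightarrow> (\<forall>l::nat. l \<ge> 2 \<longrightarrow>
            real (L_alt d r l) \<le> exp (C * (real l)\<^sup>2 * ln (real l)))"
proof (intro exI[of _ "8000::real"] conjI allI impI)
  show "(0::real) < 8000" by simp
  fix d r :: "nat \<Rightarrow> nat" and l :: nat
  assume H: "(\<forall>m n. 1 \<le> m \<longrightarrow> m \<le> n \<longrightarrow> d m \<le> d n) \<and>
     (\<forall>n\<ge>1. odd (d n) \<and> d n \<ge> 5 \<and> d n \<ge> 2 * r n + 1 \<and> r n \<ge> n \<and> d n - 2 * r n \<ge> n)"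
    and l: "2 \<le> l"
  have hyp: "\<forall>n\<ge>1. n \<le> r n \<and> n \<le> d n - 2 * r n \<and> 2 * r n + 1 \<le> d n" using H by auto
  define K where "K = 18 * l + 2"
  define dc where "dc = (\<lambda>n. 2 * min (r n) K + min (d n - 2 * r n) K)"
  obtain \<psi> where le: "local_embedding pmult (word_ball {alpha_seq d, beta_seq r} l) (Qgrp dc K) \<psi>"
    using main_emb[OF hyp K_def] unfolding dc_def by blast
  have fc: "finite (Qcar dc K) \<and> card (Qcar dc K) \<le> fact (3 * K) ^ K"
    by (rule Qcar_finite_card) (auto simp: dc_def)
  have fin: "finite (carrier (Qgrp dc K))" using fc by (simp add: Qgrp_def)
  obtain Q :: "nat monoid" and \<psi>' where Q: "group Q" "finite (carrier Q)" "order Q = order (Qgrp dc K)"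
    "local_embedding pmult (word_ball {alpha_seq d, beta_seq r} l) Q \<psi>'"
    using transfer_nat[OF Qgrp_group fin le] by blast
  have "L_alt d r l \<le> order Q"
    unfolding L_alt_def min_local_order_def
    by (rule Least_le) (use Q in blast)
  also have "order Q = card (Qcar dc K)" using Q(3) by (simp add: order_def Qgrp_def)
  also have "\<dots> \<le> fact (3 * K) ^ K" using fc by simp
  finally have "real (L_alt d r l) \<le> real (fact (3 * K) ^ K)" by (simp only: of_nat_le_iff)
  also have "\<dots> \<le> exp (8000 * (real l)\<^sup>2 * ln (real l))" unfolding K_def by (rule numeric[OF l])
  finally show "real (L_alt d r l) \<le> exp (8000 * (real l)\<^sup>2 * ln (real l))" .
qed

end
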